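(* Let $m\in\mathbb{Z}$, $p,q\in\{1,\dots,2n\}$, and assume $m+(p-n)_+\ge 1+(q-n)_+$, where $x_+=\max(x,0)$. Let $M_1\in M_p(m)$ and $M_2\in M_q(1)$. If $M_1\cdot M_2$ is a highest weight vector, then \[ M_1=\begin{cases}Y_p(m) & \text{if } p\in\{1,\dots,n\},\\ Y_{2n-p}(m-n+p) & \text{if } p\in\{n+1,\dots,2n\}.\end{cases} \]
   Context: Fix $n\ge 2$ and type $C_n$ with $I=\{1,\dots,n\}$. Let $\mathcal{M}$ be the set of Laurent monomials $M=\prod_{i\in I,k\in\mathbb{Z}}Y_i(k)^{y_i(k)}$ ($y_i(k)\in\mathbb{Z}$, finitely many nonzero); put $Y_0(k)=Y_{n+1}(k)=1$. For $i\in I$ put $\varepsilon_i(M)=\max_k(-\sum_{j>k}y_i(j))$; $M$ is a highest weight vector if $\varepsilon_i(M)=0$ for all $i\in I$ (equivalently all Kashiwara operators $\tilde e_i$ of Nakajima's monomial crystal kill $M$). The $X$-variables are $X_i(k)=Y_i(k)Y_{i-1}(k+1)^{-1}$ and $X_{\bar i}(k)=Y_{i-1}(k+n-i+1)Y_i(k+n-i+1)^{-1}$ for $1\le i\le n$, $k\in\mathbb{Z}$. The alphabet $\mathcal{I}=\{1,\dots,n,\bar n,\dots,\bar 1\}$ is ordered $1<\cdots<n<\bar n<\cdots<\bar 1$. For $1\le k\le 2n$, $m\in\mathbb{Z}$: $M_k(m)=\{X_{i_1}(k+m-1)X_{i_2}(k+m-2)\cdots X_{i_k}(m): i_j\in\mathcal{I},\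 i_1<\cdots<i_k\}$. (The quantity $m+(p-n)_+$ is called the height of a monomial of $M_p(m)$.) *)

theory Defs
  imports Main
begin

text \<open>Laurent monomials in the variables Y_i(k), i in I = {1..n}, k in Z, are represented
  by their exponent functions  y :: nat => int => int  (y i k = exponent of Y_i(k)).
  Exponents at indices i outside {1..n} are always 0 for the monomials we build
  (this encodes Y_0(k) = Y_{n+1}(k) = 1).\<close>

type_synonym monomial = "nat \<Rightarrow> int \<Rightarrow> int"

definition mono_one :: monomial where
  "mono_one = (\<lambda>i k. 0)"

definition mono_mult :: "monomial \<Rightarrow> monomial \<Rightarrow> monomial" where
  "mono_mult M N = (\<lambda>i k. M i k + N i k)"

definition mono_inv :: "monomial \<Rightarrow> monomial" where
  "mono_inv M = (\<lambda>i k. - M i k)"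

definition Y :: "nat \<Rightarrow> nat \<Rightarrow> int \<Rightarrow> monomial" where
  "Y n i k = (\<lambda>j l. if j = i \<and> l = k \<and> 1 \<le> i \<and> i \<le> n then 1 else 0)"

definition eps :: "monomial \<Rightarrow> nat \<Rightarrow> int" where
  "eps M i = Max (range (\<lambda>k. - (\<Sum>j\<in>{j. k < j \<and> M i j \<noteq> 0}. M i j)))"

definition highest_weight :: "nat \<Rightarrow> monomial \<Rightarrow> bool" where
  "highest_weight n M \<longleftrightarrow> (\<forall>i\<in>{1..n}. eps M i = 0)"

text \<open>The alphabet {1<...<n<bar n<...<bar 1} is encoded by {1..2n} with its natural order:
  letter a \<le> n stands for a, letter a > n stands for bar(2n+1-a).\<close>
definition X :: "nat \<Rightarrow> nat \<Rightarrow> int \<Rightarrow> monomial" where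
  "X n a k =
     (if a \<le> n then mono_mult (Y n a k) (mono_inv (Y n (a - 1) (k + 1)))
      else (let i = 2 * n + 1 - a in
            mono_mult (Y n (i - 1) (k + int n - int i + 1)) (mono_inv (Y n i (k + int n - int i + 1)))))"

definition Mset :: "nat \<Rightarrow> nat \<Rightarrow> int \<Rightarrow> monomial set" where
  "Mset n k m = {(\<lambda>i l. \<Sum>j\<in>{1..k}. X n (a j) (int k + m - int j) i l) | a.
       strict_mono_on {1..k} a \<and> (\<forall>j\<in>{1..k}. a j \<in> {1..2*n})}"

end

theory Submission
  imports Defs
begin

lemma Y_app: "Y n i k j l = (if j = i \<and> l = k \<and> 1 \<le> i \<and> i \<le> n then 1 else 0)"
  by (simp add: Y_def)

lemma X_low: "a \<le> n \<Longrightarrow> X n a k i l =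
   (if i = a \<and> l = k \<and> 1 \<le> a then 1 else 0) - (if i = a - 1 \<and> l = k + 1 \<and> 2 \<le> a then 1 else 0)"
  unfolding X_def mono_mult_def mono_inv_def Y_def by auto

lemma X_high: "n < a \<Longrightarrow> a \<le> 2*n \<Longrightarrow> X n a k i l =
   (if i = 2*n - a \<and> l = k + int n - int (2*n+1-a) + 1 \<and> 1 \<le> 2*n - a then 1 else 0)
 - (if i = 2*n + 1 - a \<and> l = k + int n - int (2*n+1-a) + 1 then 1 else 0)"
  unfolding X_def mono_mult_def mono_inv_def Y_def Let_def by auto

definition D :: "nat \<Rightarrow> nat \<Rightarrow> int \<Rightarrow> monomial" where
  "D n w t = (\<lambda>i l. X n (Suc w) t i l - X n w t i l)"

definition kap :: "nat \<Rightarrow> nat \<Rightarrow> int \<Rightarrow> int" where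
  "kap n w t = t + 1 + int (w - n)"

definition rho :: "nat \<Rightarrow> nat \<Rightarrow> nat" where
  "rho n w = min w (2*n - w)"

lemma D_a: assumes "1 \<le> w" "w < 2*n" "l > kap n w t" shows "D n w t i l = 0"
proof (cases "w < n")
  case True then show ?thesis using assms by (auto simp add: D_def kap_def X_low)
next
  case False
  show ?thesis
  proof (cases "w = n")
    case True then show ?thesis using assms by (simp add: D_def kap_def X_low X_high)
  next
    case False
    then have "n < w" using \<open>\<not> w < n\<close> by simp
    then show ?thesis using assms by (simp add: D_def kap_def X_high)
  qed
qed

lemma D_b: assumes "1 \<le> w" "w < 2*n" "i > rho n w" shows "D n w t i (kap n w t) = 0"
proof (cases "w < n")
  case True then show ?thesis using assms by (auto simp add: D_def kap_def rho_def X_low)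
next
  case False
  show ?thesis
  proof (cases "w = n")
    case True then show ?thesis using assms by (auto simp add: D_def kap_def rho_def X_low X_high)
  next
    case False
    then have "n < w" using \<open>\<not> w < n\<close> by simp
    then show ?thesis using assms by (simp add: D_def kap_def rho_def X_high)
  qed
qed

lemma D_c: assumes "1 \<le> w" "w < 2*n" shows "D n w t (rho n w) (kap n w t) = -1"
proof (cases "w < n")
  case True then show ?thesis using assms by (auto simp add: D_def kap_def rho_def X_low)
next
  case False
  show ?thesis
  proof (cases "w = n")
    case True then show ?thesis using assms by (auto simp add: D_def kap_def rho_def X_low X_high)
  next
    case False
    then have "n < w" using \<open>\<not> w < n\<close> by simp
    then show ?thesis using assms by (simp add: D_def kap_def rho_def X_high)
  qed
qed


lemma XY_low: "a \<le> n \<Longrightarrow> X n a k i l = Y n a k i l - Y n (a - 1) (k + 1) i l"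
  unfolding X_def mono_mult_def mono_inv_def by simp

lemma XY_high: "n < a \<Longrightarrow> a \<le> 2*n \<Longrightarrow> X n a k i l = Y n (2*n - a) (k + int a - int n) i l - Y n (2*n + 1 - a) (k + int a - int n) i l"
proof -
  assume a: "n < a" "a \<le> 2*n"
  have e1: "2*n + 1 - a - 1 = 2*n - a" by simp
  have e2: "k + int n - int (2*n + 1 - a) + 1 = k + int a - int n" using a by (simp add: of_nat_diff)
  show ?thesis using a unfolding X_def mono_mult_def mono_inv_def Let_def e1 e2 by simp
qed

definition topm :: "nat \<Rightarrow> nat \<Rightarrow> int \<Rightarrow> monomial" where
  "topm n p c = (if p \<le> n then Y n p (c - int p) else Y n (2*n - p) (c - int n))"

lemma top_step:
  assumes "Suc p \<le> 2*n"
  shows "topm n p c i l + X n (Suc p) (c - int (Suc p)) i l = topm n (Suc p) c i l"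
proof (cases "Suc p \<le> n")
  case True
  have "topm n p c i l = Y n p (c - int p) i l" using True by (simp add: topm_def)
  moreover have "X n (Suc p) (c - int (Suc p)) i l = Y n (Suc p) (c - int (Suc p)) i l - Y n p (c - int p) i l"
    using True by (simp add: XY_low algebra_simps)
  moreover have "topm n (Suc p) c i l = Y n (Suc p) (c - int (Suc p)) i l" using True by (simp add: topm_def)
  ultimately show ?thesis by simp
next
  case False
  have X: "X n (Suc p) (c - int (Suc p)) i l = Y n (2*n - Suc p) (c - int n) i l - Y n (2*n - p) (c - int n) i l"
    using False assms by (simp add: XY_high algebra_simps)
  show ?thesis
  proof (cases "p = n")
    case True
    have "topm n p c i l = Y n (2*n - p) (c - int n) i l" using True by (simp add: topm_def)
    moreover have "topm n (Suc p) c i l = Y n (2*n - Suc p) (c - int n) i l" using True by (simp add: topm_def)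
    ultimately show ?thesis using X by simp
  next
    case False
    then have "n < p" using \<open>\<not> Suc p \<le> n\<close> by simp
    then have "topm n p c i l = Y n (2*n - p) (c - int n) i l" by (simp add: topm_def)
    moreover have "topm n (Suc p) c i l = Y n (2*n - Suc p) (c - int n) i l" using \<open>n < p\<close> by (simp add: topm_def)
    ultimately show ?thesis using X by simp
  qed
qed
lemma top_sum:
  "p \<le> 2*n \<Longrightarrow> (\<Sum>j\<in>{1..p}. X n j (c - int j) i l) = topm n p c i l"
proof (induction p)
  case 0 then show ?case by (simp add: topm_def Y_app)
next
  case (Suc p)
  then have "(\<Sum>j\<in>{1..Suc p}. X n j (c - int j) i l) = topm n p c i l + X n (Suc p) (c - int (Suc p)) i l"
    by simp
  also have "\<dots> = topm n (Suc p) c i l" using top_step Suc.prems by blast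
  finally show ?case .
qed

lemma X_supp: assumes "1 \<le> a" "a \<le> 2*n" "l < k" shows "X n a k i l = 0"
proof (cases "a \<le> n")
  case True then show ?thesis using assms by (simp add: X_low)
next
  case False then show ?thesis using assms by (simp add: X_high)
qed

lemma X_tele: assumes "j \<le> a" shows "X n a t i l = X n j t i l + (\<Sum>w\<in>{j..<a}. D n w t i l)"
proof -
  have "(\<Sum>w\<in>{j..<a}. D n w t i l) = (\<Sum>w=j..<a. (\<lambda>v. X n v t i l) (Suc w) - (\<lambda>v. X n v t i l) w)"
    by (simp add: D_def)
  also have "\<dots> = X n a t i l - X n j t i l" using sum_Suc_diff'[OF assms, of "\<lambda>v. X n v t i l"] by simp
  finally show ?thesis by simp
qed

lemma eps_pos:
  assumes "P i K < 0" "\<forall>l>K. P i l = 0" "finite {l. P i l \<noteq> 0}"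
  shows "eps P i > 0"
proof -
  define S where "S = {l. P i l \<noteq> 0}"
  define f where "f = (\<lambda>k. - (\<Sum>j\<in>{j. k < j \<and> P i j \<noteq> 0}. P i j))"
  have "range f \<subseteq> (\<lambda>B. - sum (P i) B) ` Pow S"
    unfolding f_def S_def by auto
  then have fin: "finite (range f)" using assms(3) S_def by (meson Finite_Set.finite_Pow_iff finite_imageI finite_subset)
  have "{j. K - 1 < j \<and> P i j \<noteq> 0} = {K}"
    using assms(1,2) by force
  then have "f (K - 1) = - P i K" by (simp add: f_def)
  then have "f (K - 1) > 0" using assms(1) by simp
  moreover have "f (K - 1) \<le> Max (range f)" using fin by simp
  ultimately show ?thesis unfolding eps_def f_def by simp
qed

lemma key:
  fixes F :: "'x set" and w :: "'x \<Rightarrow> nat" and t :: "'x \<Rightarrow> int" and T P :: monomial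
  assumes fin: "finite F" and ne: "F \<noteq> {}" and wr: "\<And>x. x \<in> F \<Longrightarrow> 1 \<le> w x \<and> w x < 2*n"
    and T0: "\<And>i l. l \<ge> Max ((\<lambda>x. kap n (w x) (t x)) ` F) \<Longrightarrow> T i l = 0"
    and Pdef: "\<And>i l. P i l = T i l + (\<Sum>x\<in>F. D n (w x) (t x) i l)"
  shows "\<exists>i\<in>{1..n}. \<exists>K. P i K < 0 \<and> (\<forall>l>K. P i l = 0)"
proof -
  define K where "K = Max ((\<lambda>x. kap n (w x) (t x)) ` F)"
  define F' where "F' = {x\<in>F. kap n (w x) (t x) = K}"
  have "K \<in> (\<lambda>x. kap n (w x) (t x)) ` F" unfolding K_def using fin ne by (intro Max_in) auto
  then have F'ne: "F' \<noteq> {}" unfolding F'_def by auto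
  have F'fin: "finite F'" unfolding F'_def using fin by simp
  have ub: "\<And>x. x \<in> F \<Longrightarrow> kap n (w x) (t x) \<le> K" unfolding K_def using fin by simp
  define i where "i = Max ((\<lambda>x. rho n (w x)) ` F')"
  have "i \<in> (\<lambda>x. rho n (w x)) ` F'" unfolding i_def using F'fin F'ne by (intro Max_in) auto
  then obtain x0 where x0: "x0 \<in> F'" "rho n (w x0) = i" by auto
  have ubi: "\<And>x. x \<in> F' \<Longrightarrow> rho n (w x) \<le> i" unfolding i_def using F'fin by simp
  have x0F: "x0 \<in> F" and x0K: "kap n (w x0) (t x0) = K" using x0 unfolding F'_def by auto
  have terms: "D n (w x) (t x) i K \<le> 0" if xF: "x \<in> F" for x
  proof (cases "kap n (w x) (t x) < K")
    case True then show ?thesis using D_a[where w="w x" and t="t x" and l=K and i=i and n=n] wr[OF xF] by simp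
  next
    case False
    then have kx: "kap n (w x) (t x) = K" using ub[OF xF] by simp
    then have "x \<in> F'" unfolding F'_def using xF by simp
    then have "rho n (w x) \<le> i" by (rule ubi)
    then show ?thesis
    proof (cases "rho n (w x) < i")
      case True then show ?thesis using D_b[where w="w x" and t="t x" and i=i and n=n] wr[OF xF] kx by simp
    next
      case False
      then have "rho n (w x) = i" using \<open>rho n (w x) \<le> i\<close> by simp
      then show ?thesis using D_c[where w="w x" and t="t x" and n=n] wr[OF xF] kx by simp
    qed
  qed
  have t0: "D n (w x0) (t x0) i K = -1" using D_c[where w="w x0" and t="t x0" and n=n] wr[OF x0F] x0K x0(2) by simp
  have "(\<Sum>x\<in>F. D n (w x) (t x) i K) = D n (w x0) (t x0) i K + (\<Sum>x\<in>F - {x0}. D n (w x) (t x) i K)"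
    using fin x0F by (simp add: sum.remove)
  also have "\<dots> \<le> -1"
  proof -
    have "(\<Sum>x\<in>F - {x0}. D n (w x) (t x) i K) \<le> 0" by (rule sum_nonpos) (use terms in auto)
    then show ?thesis using t0 by simp
  qed
  finally have "(\<Sum>x\<in>F. D n (w x) (t x) i K) \<le> -1" .
  moreover have "T i K = 0" using T0 K_def by simp
  ultimately have neg: "P i K < 0" using Pdef by simp
  have tail: "P i l = 0" if "l > K" for l
  proof -
    have "T i l = 0" using T0 K_def that by simp
    moreover have "D n (w x) (t x) i l = 0" if "x \<in> F" for x
      using D_a[where w="w x" and t="t x" and l=l and i=i and n=n] wr[OF that] ub[OF that] \<open>l > K\<close> by simp
    ultimately show ?thesis using Pdef by simp
  qed
  have "1 \<le> i \<and> i \<le> n" using x0(2) wr[OF x0F] unfolding rho_def by auto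
  then have "i \<in> {1..n}" by simp
  then show ?thesis using neg tail by blast
qed

lemma col_decomp:
  assumes "\<forall>j\<in>{1..p}. j \<le> a j" "p \<le> 2*n"
  shows "(\<Sum>j\<in>{1..p}. X n (a j) (c - int j) i l) =
     topm n p c i l + (\<Sum>(j,v)\<in>(SIGMA j:{1..p}. {j..<a j}). D n v (c - int j) i l)"
proof -
  have "(\<Sum>j\<in>{1..p}. X n (a j) (c - int j) i l) =
        (\<Sum>j\<in>{1..p}. X n j (c - int j) i l + (\<Sum>v\<in>{j..<a j}. D n v (c - int j) i l))"
    using assms(1) X_tele by (intro sum.cong) auto
  also have "\<dots> = (\<Sum>j\<in>{1..p}. X n j (c - int j) i l) + (\<Sum>j\<in>{1..p}. \<Sum>v\<in>{j..<a j}. D n v (c - int j) i l)"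
    by (simp add: sum.distrib)
  also have "\<dots> = topm n p c i l + (\<Sum>(j,v)\<in>(SIGMA j:{1..p}. {j..<a j}). D n v (c - int j) i l)"
    using top_sum[OF assms(2)] by (simp add: sum.Sigma)
  finally show ?thesis .
qed

lemma seq_ge:
  fixes a :: "nat \<Rightarrow> nat" and p n :: nat
  assumes "strict_mono_on {1..p} a" "\<forall>j\<in>{1..p}. a j \<in> {1..2*n}"
  shows "\<forall>j\<in>{1..p}. j \<le> a j"
proof -
  have "j \<le> p \<longrightarrow> 1 \<le> j \<longrightarrow> j \<le> a j" for j
  proof (induction j)
    case 0 then show ?case by simp
  next
    case (Suc j)
    show ?case
    proof (intro impI)
      assume h: "Suc j \<le> p" "1 \<le> Suc j"
      show "Suc j \<le> a (Suc j)"
      proof (cases "j = 0")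
        case True then show ?thesis using assms(2) h by auto
      next
        case False
        then have "j \<le> a j" using Suc.IH h by simp
        moreover have "a j < a (Suc j)" using assms(1) h False
          by (intro strict_mono_onD[OF assms(1)]) auto
        ultimately show ?thesis by simp
      qed
    qed
  qed
  then show ?thesis by auto
qed

lemma col_zero_below:
  assumes "\<forall>j\<in>{1..p}. a j \<in> {1..2*n}" "l < m"
  shows "(\<Sum>j\<in>{1..p}. X n (a j) (int p + m - int j) i l) = 0"
  using assms by (intro sum.neutral) (auto intro!: X_supp)

theorem theorem5p10:
  fixes n p q :: nat and m :: int and M1 M2 :: monomial
  assumes "n \<ge> 2"
    and "p \<in> {1..2*n}" and "q \<in> {1..2*n}"
    and "m + max (int p - int n) 0 \<ge> 1 + max (int q - int n) 0"
    and "M1 \<in> Mset n p m" and "M2 \<in> Mset n q 1"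
    and "highest_weight n (mono_mult M1 M2)"
  shows "M1 = (if p \<le> n then Y n p m else Y n (2*n - p) (m - int n + int p))"
proof -
  obtain a where a: "M1 = (\<lambda>i l. \<Sum>j\<in>{1..p}. X n (a j) (int p + m - int j) i l)"
    "strict_mono_on {1..p} a" "\<forall>j\<in>{1..p}. a j \<in> {1..2*n}"
    using assms(5) unfolding Mset_def by blast
  obtain b where b: "M2 = (\<lambda>i l. \<Sum>j\<in>{1..q}. X n (b j) (int q + 1 - int j) i l)"
    "strict_mono_on {1..q} b" "\<forall>j\<in>{1..q}. b j \<in> {1..2*n}"
    using assms(6) unfolding Mset_def by blast
  have age: "\<forall>j\<in>{1..p}. j \<le> a j" using seq_ge[OF a(2) a(3)] .
  have bge: "\<forall>j\<in>{1..q}. j \<le> b j" using seq_ge[OF b(2) b(3)] .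
  have pn: "p \<le> 2*n" and qn: "q \<le> 2*n" using assms(2,3) by auto
  define P where "P = mono_mult M1 M2"
  have ida: "\<forall>j\<in>{1..p}. a j = j"
  proof (rule ccontr)
    assume "\<not> (\<forall>j\<in>{1..p}. a j = j)"
    then obtain j0 where j0: "j0 \<in> {1..p}" "a j0 \<noteq> j0" by auto
    then have j0lt: "j0 < a j0" using age by force
    define F1 where "F1 = (SIGMA j:{1..p}. {j..<a j})"
    define F2 where "F2 = (SIGMA j:{1..q}. {j..<b j})"
    define F where "F = F1 <+> F2"
    define w where "w = (\<lambda>x::(nat\<times>nat)+(nat\<times>nat). case x of Inl jv \<Rightarrow> snd jv | Inr jv \<Rightarrow> snd jv)"
    define t where "t = (\<lambda>x::(nat\<times>nat)+(nat\<times>nat). case x of Inl jv \<Rightarrow> int p + m - int (fst jv) | Inr jv \<Rightarrow> int q + 1 - int (fst jv))"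
    define T where "T = (\<lambda>i l. topm n p (int p + m) i l + topm n q (int q + 1) i l)"
    have finF1: "finite F1" and finF2: "finite F2" unfolding F1_def F2_def by auto
    have finF: "finite F" unfolding F_def using finF1 finF2 by simp
    have x0: "Inl (j0, j0) \<in> F" unfolding F_def F1_def using j0 j0lt by auto
    then have neF: "F \<noteq> {}" by auto
    have wr: "1 \<le> w x \<and> w x < 2*n" if "x \<in> F" for x
    proof (cases x)
      case (Inl jv)
      have "jv \<in> F1" using that Inl unfolding F_def by auto
      then obtain j v where "jv = (j, v)" "j \<in> {1..p}" "j \<le> v" "v < a j" unfolding F1_def by auto
      moreover have "a j \<le> 2*n" using a(3) \<open>j \<in> {1..p}\<close> by auto
      ultimately show ?thesis using Inl unfolding w_def by auto
    next
      case (Inr jv)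
      have "jv \<in> F2" using that Inr unfolding F_def by auto
      then obtain j v where "jv = (j, v)" "j \<in> {1..q}" "j \<le> v" "v < b j" unfolding F2_def by auto
      moreover have "b j \<le> 2*n" using b(3) \<open>j \<in> {1..q}\<close> by auto
      ultimately show ?thesis using Inr unfolding w_def by auto
    qed
    define Km where "Km = Max ((\<lambda>x. kap n (w x) (t x)) ` F)"
    have "kap n (w (Inl (j0, j0))) (t (Inl (j0, j0))) \<le> Km" unfolding Km_def using finF x0 by simp
    then have Kge: "int p + m - int j0 + 1 + int (j0 - n) \<le> Km" by (simp add: kap_def w_def t_def)
    have h1: "m + max (int p - int n) 0 < Km"
    proof -
      have "j0 \<le> p" "1 \<le> j0" using j0 by auto
      then have "m + max (int p - int n) 0 < int p + m - int j0 + 1 + int (j0 - n)" by (cases "j0 \<le> n") auto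
      then show ?thesis using Kge by linarith
    qed
    have T0: "T i l = 0" if "l \<ge> Km" for i l
    proof -
      have "topm n p (int p + m) i l = 0" using that h1 by (auto simp: topm_def Y_app)
      moreover have "topm n q (int q + 1) i l = 0" using that h1 assms(4) by (auto simp: topm_def Y_app)
      ultimately show ?thesis by (simp add: T_def)
    qed
    have Pdef: "P i l = T i l + (\<Sum>x\<in>F. D n (w x) (t x) i l)" for i l
    proof -
      have "P i l = M1 i l + M2 i l" by (simp add: P_def mono_mult_def)
      also have "M1 i l = topm n p (int p + m) i l + (\<Sum>(j,v)\<in>F1. D n v (int p + m - int j) i l)"
        using col_decomp[OF age pn, of "int p + m"] a(1) F1_def by simp
      also have "M2 i l = topm n q (int q + 1) i l + (\<Sum>(j,v)\<in>F2. D n v (int q + 1 - int j) i l)"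
        using col_decomp[OF bge qn, of "int q + 1"] b(1) F2_def by simp
      also have "(\<Sum>x\<in>F. D n (w x) (t x) i l) = (\<Sum>(j,v)\<in>F1. D n v (int p + m - int j) i l) + (\<Sum>(j,v)\<in>F2. D n v (int q + 1 - int j) i l)"
        unfolding F_def using finF1 finF2 by (simp add: sum.Plus w_def t_def comp_def case_prod_beta)
      ultimately show ?thesis by (simp add: T_def)
    qed
    have "\<exists>i\<in>{1..n}. \<exists>K. P i K < 0 \<and> (\<forall>l>K. P i l = 0)"
    proof (rule key[where F=F and w=w and t=t and T=T])
      show "finite F" by (rule finF)
      show "F \<noteq> {}" by (rule neF)
      show "\<And>x. x \<in> F \<Longrightarrow> 1 \<le> w x \<and> w x < 2*n" by (rule wr)
      show "\<And>i l. Max ((\<lambda>x. kap n (w x) (t x)) ` F) \<le> l \<Longrightarrow> T i l = 0" using T0 unfolding Km_def by blast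
      show "\<And>i l. P i l = T i l + (\<Sum>x\<in>F. D n (w x) (t x) i l)" by (rule Pdef)
    qed
    then obtain i K where iK: "i \<in> {1..n}" "P i K < 0" "\<forall>l>K. P i l = 0" by blast
    have "finite {l. P i l \<noteq> 0}"
    proof (rule finite_subset)
      show "{l. P i l \<noteq> 0} \<subseteq> {min m 1..K}"
      proof
        fix l assume l: "l \<in> {l. P i l \<noteq> 0}"
        have "\<not> l > K" using iK(3) l by auto
        moreover have "\<not> l < min m 1"
        proof
          assume ll: "l < min m 1"
          have "M1 i l = 0" using a(1) col_zero_below[OF a(3), of l m i] ll by simp
          moreover have "M2 i l = 0" using b(1) col_zero_below[OF b(3), of l 1 i] ll by simp
          ultimately show False using l by (simp add: P_def mono_mult_def)
        qed
        ultimately show "l \<in> {min m 1..K}" by (auto simp: min_def)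
      qed
    qed simp
    then have "eps P i > 0" using eps_pos iK by blast
    moreover have "eps P i = 0" using assms(7) iK(1) unfolding highest_weight_def P_def by blast
    ultimately show False by simp
  qed
  have "M1 = (\<lambda>i l. \<Sum>j\<in>{1..p}. X n j (int p + m - int j) i l)"
    unfolding a(1) using ida by (intro ext sum.cong) auto
  also have "\<dots> = topm n p (int p + m)" using top_sum[OF pn] by (intro ext) simp
  also have "\<dots> = (if p \<le> n then Y n p m else Y n (2*n - p) (m - int n + int p))"
    by (simp add: topm_def algebra_simps)
  finally show ?thesis .
qed

end
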